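(* Let $H$ be a simple undirected graph on vertex set $[n]$, let $\{u_i\}_{i=1}^n$ and $\{w_j\}_{j=1}^n$ be two orthonormal families in $\mathbb{C}^d$, let $\{e_i\}$ be the standard basis of $\mathbb{C}^n$, and let $K=\sum_{i=1}^n |e_i\rangle\langle u_i\otimes w_i|$. If $\rho\in\mathcal{F}_H$ is separable, then $Z_K(\rho)=K\rho K^*\in\operatorname{R}_1[\mathcal{M}_n^+(H)]$.
   Context: A bipartite PSD $\rho$ on $\mathbb{C}^d\otimes\mathbb{C}^d$ is separable if $\rho=\sum_k|v_k\rangle\langle v_k|\otimes|x_k\rangle\langle x_k|$ for finitely many vectors. For an $n\times n$ matrix $X$, $G(X)$ is the undirected graph on $[n]$ with edge set $\{\{i,j\}: i\ne j,\ X_{ij}X_{ji}\neq 0\}$. $\mathcal{M}_n^+(H)$ is the cone of $n\times n$ PSD matrices $X$ with $G(X)\subseteq H$. $D(\rho)_{ij}=\langle u_i\otimes w_j|\rho|u_i\otimes w_j\rangle$ and $\mathcal{F}_H=\{\rho\in(\mathcal{M}_d\otimes\mathcal{M}_d)^+: G(D(\rho))\subseteq H\}$. For a cone $\mathcal{C}\subseteq\mathcal{M}_n^+$, $\operatorname{R}_1[\mathcal{C}]$ is the convex cone generated by the rank-1 matrices belonging to $\mathcal{C}$. *)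

theory Defs
  imports Complex_Main "Jordan_Normal_Form.DL_Rank"
begin

(* Complex matrices/vectors: Jordan_Normal_Form types 'complex mat', 'complex vec'.
   Indices are 0-based: [n] is rendered as {0..<n}. *)

definition adj :: "complex mat \<Rightarrow> complex mat" where
  "adj A = mat (dim_col A) (dim_row A) (\<lambda>(i,j). cnj (A $$ (j,i)))"

definition ketbra :: "complex vec \<Rightarrow> complex vec \<Rightarrow> complex mat" where
  "ketbra v w = mat (dim_vec v) (dim_vec w) (\<lambda>(i,j). v $ i * cnj (w $ j))"

definition expval :: "complex vec \<Rightarrow> complex mat \<Rightarrow> complex" where
  "expval v A = scalar_prod (conjugate v) (mult_mat_vec A v)"

(* tensor (Kronecker) products; C^p (x) C^q identified with C^(p*q), index (a,b) |-> a*q+b *)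
definition kron_vec :: "complex vec \<Rightarrow> complex vec \<Rightarrow> complex vec" where
  "kron_vec v w = vec (dim_vec v * dim_vec w)
     (\<lambda>i. v $ (i div dim_vec w) * w $ (i mod dim_vec w))"

definition kron_mat :: "complex mat \<Rightarrow> complex mat \<Rightarrow> complex mat" where
  "kron_mat A B = mat (dim_row A * dim_row B) (dim_col A * dim_col B)
     (\<lambda>(i,j). A $$ (i div dim_row B, j div dim_col B) * B $$ (i mod dim_row B, j mod dim_col B))"

definition psd :: "nat \<Rightarrow> complex mat \<Rightarrow> bool" where
  "psd n A \<longleftrightarrow> A \<in> carrier_mat n n \<and> adj A = A \<and>
     (\<forall>v \<in> carrier_vec n. expval v A \<in> \<real> \<and> Re (expval v A) \<ge> 0)"

definition graph_of :: "nat \<Rightarrow> complex mat \<Rightarrow> nat set set" where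
  "graph_of n X = {{i,j} | i j. i < n \<and> j < n \<and> i \<noteq> j \<and> X $$ (i,j) * X $$ (j,i) \<noteq> 0}"

definition simple_graph :: "nat \<Rightarrow> nat set set \<Rightarrow> bool" where
  "simple_graph n H \<longleftrightarrow> (\<forall>e \<in> H. \<exists>i j. e = {i,j} \<and> i \<noteq> j \<and> i < n \<and> j < n)"

definition psd_graph_cone :: "nat \<Rightarrow> nat set set \<Rightarrow> complex mat set" where
  "psd_graph_cone n H = {X. psd n X \<and> graph_of n X \<subseteq> H}"

(* R_1[C] for a cone C of n x n matrices: convex cone generated by the rank-1 members of C
   (finite nonnegative combinations; the empty combination gives 0) *)
definition R1 :: "nat \<Rightarrow> complex mat set \<Rightarrow> complex mat set" where
  "R1 n C = {Y. \<exists>(m::nat) (c :: nat \<Rightarrow> real) Xs.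
       (\<forall>k<m. c k \<ge> 0 \<and> Xs k \<in> C \<and> Xs k \<in> carrier_mat n n \<and> vec_space.rank n (Xs k) = 1) \<and>
       Y = mat n n (\<lambda>ij. \<Sum>k<m. complex_of_real (c k) * Xs k $$ ij)}"

definition separable_state :: "nat \<Rightarrow> complex mat \<Rightarrow> bool" where
  "separable_state d \<rho> \<longleftrightarrow> (\<exists>(m::nat) v x.
       (\<forall>k<m. v k \<in> carrier_vec d \<and> x k \<in> carrier_vec d) \<and>
       \<rho> = mat (d*d) (d*d)
          (\<lambda>ij. \<Sum>k<m. kron_mat (ketbra (v k) (v k)) (ketbra (x k) (x k)) $$ ij))"

definition orthonormal_family :: "nat \<Rightarrow> nat \<Rightarrow> (nat \<Rightarrow> complex vec) \<Rightarrow> bool" where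
  "orthonormal_family d n u \<longleftrightarrow> (\<forall>i<n. u i \<in> carrier_vec d) \<and>
     (\<forall>i<n. \<forall>j<n. cscalar_prod (u j) (u i) = (if i = j then 1 else 0))"

definition Dmat :: "nat \<Rightarrow> (nat \<Rightarrow> complex vec) \<Rightarrow> (nat \<Rightarrow> complex vec) \<Rightarrow> complex mat \<Rightarrow> complex mat" where
  "Dmat n u w \<rho> = mat n n (\<lambda>(i,j). expval (kron_vec (u i) (w j)) \<rho>)"

definition FH :: "nat \<Rightarrow> nat \<Rightarrow> (nat \<Rightarrow> complex vec) \<Rightarrow> (nat \<Rightarrow> complex vec) \<Rightarrow> nat set set \<Rightarrow> complex mat set" where
  "FH d n u w H = {\<rho>. psd (d*d) \<rho> \<and> graph_of n (Dmat n u w \<rho>) \<subseteq> H}"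

definition std_basis :: "nat \<Rightarrow> nat \<Rightarrow> complex vec" where
  "std_basis n i = vec n (\<lambda>k. if k = i then 1 else 0)"

definition Kmat :: "nat \<Rightarrow> nat \<Rightarrow> (nat \<Rightarrow> complex vec) \<Rightarrow> (nat \<Rightarrow> complex vec) \<Rightarrow> complex mat" where
  "Kmat d n u w = mat n (d*d) (\<lambda>ij. \<Sum>i<n. ketbra (std_basis n i) (kron_vec (u i) (w i)) $$ ij)"

end

theory Submission imports Defs begin

lemma sum_divmod:
  fixes g :: "nat \<Rightarrow> nat \<Rightarrow> 'a::comm_monoid_add"
  shows "(\<Sum>p<d*d. g (p div d) (p mod d)) = (\<Sum>a<d. \<Sum>b<d. g a b)"
proof -
  have "(\<Sum>p<d*d. g (p div d) (p mod d)) = (\<Sum>a<d. \<Sum>p\<in>{a*d..<a*d+d}. g (p div d) (p mod d))"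
    using sum.nat_group[of "\<lambda>p. g (p div d) (p mod d)" d d] by simp
  also have "\<dots> = (\<Sum>a<d. \<Sum>b<d. g a b)"
  proof (rule sum.cong[OF refl])
    fix a assume "a \<in> {..<d}"
    have e: "{a*d..<a*d+d} = (\<lambda>b. a*d+b) ` {..<d}"
      apply (auto simp: image_iff)
      apply (rule_tac x="x - a*d" in bexI)
      by auto
    have "(\<Sum>p\<in>{a*d..<a*d+d}. g (p div d) (p mod d)) = (\<Sum>b<d. g ((a*d+b) div d) ((a*d+b) mod d))"
      unfolding e by (subst sum.reindex) (auto simp: inj_on_def)
    also have "\<dots> = (\<Sum>b<d. g a b)"
      by (rule sum.cong) auto
    finally show "(\<Sum>p\<in>{a*d..<a*d+d}. g (p div d) (p mod d)) = (\<Sum>b<d. g a b)" .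
  qed
  finally show ?thesis .
qed

definition ip :: "nat \<Rightarrow> complex vec \<Rightarrow> complex vec \<Rightarrow> complex" where
  "ip N y z = (\<Sum>p<N. cnj (y$p) * z$p)"

lemma dim_kron[simp]: "dim_vec (kron_vec v w) = dim_vec v * dim_vec w"
  by (simp add: kron_vec_def)

lemma ip_kron:
  assumes "a \<in> carrier_vec d" "b \<in> carrier_vec d" "c \<in> carrier_vec d" "e \<in> carrier_vec d"
  shows "ip (d*d) (kron_vec a b) (kron_vec c e) = ip d a c * ip d b e"
proof -
  have "ip (d*d) (kron_vec a b) (kron_vec c e) =
     (\<Sum>p<d*d. (\<lambda>i j. cnj (a$i * b$j) * (c$i * e$j)) (p div d) (p mod d))"
    unfolding ip_def
    apply (rule sum.cong[OF refl])
    using assms by (auto simp: kron_vec_def less_mult_imp_div_less)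
  also have "\<dots> = (\<Sum>i<d. \<Sum>j<d. cnj (a$i * b$j) * (c$i * e$j))" by (rule sum_divmod)
  also have "\<dots> = ip d a c * ip d b e"
    unfolding ip_def sum_product by (auto intro!: sum.cong simp: algebra_simps)
  finally show ?thesis .
qed

lemma sum3_swap:
  fixes f :: "nat \<Rightarrow> nat \<Rightarrow> nat \<Rightarrow> complex"
  shows "(\<Sum>q<N. \<Sum>p<N. \<Sum>k<m. f q p k) = (\<Sum>k<m. \<Sum>p<N. \<Sum>q<N. f q p k)"
proof -
  have "(\<Sum>q<N. \<Sum>p<N. \<Sum>k<m. f q p k) = (\<Sum>q<N. \<Sum>k<m. \<Sum>p<N. f q p k)"
    by (rule sum.cong[OF refl], rule sum.swap)
  also have "\<dots> = (\<Sum>k<m. \<Sum>q<N. \<Sum>p<N. f q p k)" by (rule sum.swap)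
  also have "\<dots> = (\<Sum>k<m. \<Sum>p<N. \<Sum>q<N. f q p k)"
    by (rule sum.cong[OF refl], rule sum.swap)
  finally show ?thesis .
qed

lemma KrhoK:
  fixes z :: "nat \<Rightarrow> complex vec" and K :: "complex mat"
  assumes K: "K \<in> carrier_mat n N" and zc: "\<forall>k<m. z k \<in> carrier_vec N"
    and rho: "\<rho> = mat N N (\<lambda>(i,j). \<Sum>k<m. z k $ i * cnj (z k $ j))"
  shows "K * \<rho> * adj K = mat n n (\<lambda>(i,j). \<Sum>k<m. (K *\<^sub>v z k) $ i * cnj ((K *\<^sub>v z k) $ j))"
proof (rule eq_matI)
  have adjc: "adj K \<in> carrier_mat N n" using K by (simp add: adj_def)
  have rc: "\<rho> \<in> carrier_mat N N" using rho by simp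
  show "dim_row (K * \<rho> * adj K) = dim_row (mat n n (\<lambda>(i,j). \<Sum>k<m. (K *\<^sub>v z k) $ i * cnj ((K *\<^sub>v z k) $ j)))"
    using K by simp
  show "dim_col (K * \<rho> * adj K) = dim_col (mat n n (\<lambda>(i,j). \<Sum>k<m. (K *\<^sub>v z k) $ i * cnj ((K *\<^sub>v z k) $ j)))"
    using K adjc by simp
  fix i j assume i: "i < dim_row (mat n n (\<lambda>(i,j). \<Sum>k<m. (K *\<^sub>v z k) $ i * cnj ((K *\<^sub>v z k) $ j)))"
    and j: "j < dim_col (mat n n (\<lambda>(i,j). \<Sum>k<m. (K *\<^sub>v z k) $ i * cnj ((K *\<^sub>v z k) $ j)))"
  then have i: "i < n" and j: "j < n" by auto
  have "(K * \<rho> * adj K) $$ (i,j) = (\<Sum>q<N. (\<Sum>p<N. K $$ (i,p) * (\<Sum>k<m. z k $ p * cnj (z k $ q))) * cnj (K $$ (j,q)))"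
    using K adjc rc i j rho by (simp add: index_mult_mat scalar_prod_def adj_def atLeast0LessThan)
  also have "\<dots> = (\<Sum>q<N. \<Sum>p<N. \<Sum>k<m. K $$ (i,p) * z k $ p * (cnj (K $$ (j,q)) * cnj (z k $ q)))"
    by (simp add: sum_distrib_left sum_distrib_right algebra_simps)
  also have "\<dots> = (\<Sum>k<m. \<Sum>p<N. \<Sum>q<N. K $$ (i,p) * z k $ p * (cnj (K $$ (j,q)) * cnj (z k $ q)))"
    using sum3_swap[of "\<lambda>q p k. K $$ (i,p) * z k $ p * (cnj (K $$ (j,q)) * cnj (z k $ q))" m N] by simp
  also have "\<dots> = (\<Sum>k<m. (K *\<^sub>v z k) $ i * cnj ((K *\<^sub>v z k) $ j))"
    apply (rule sum.cong[OF refl])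
    using K i j zc by (auto simp: scalar_prod_def cnj_sum sum_product atLeast0LessThan)
  finally show "(K * \<rho> * adj K) $$ (i,j) = mat n n (\<lambda>(i,j). \<Sum>k<m. (K *\<^sub>v z k) $ i * cnj ((K *\<^sub>v z k) $ j)) $$ (i,j)"
    using i j by simp
qed

lemma (in vec_space) lin_indpt_single:
  assumes "c \<in> carrier_vec n" "c \<noteq> 0\<^sub>v n"
  shows "lin_indpt {c}"
proof -
  have H: "a c = 0" if l: "lincomb a {c} = 0\<^sub>v n" for a
  proof -
    have "lincomb a {c} = a c \<cdot>\<^sub>v c"
      using assms unfolding lincomb_def by simp
    then have eq: "a c \<cdot>\<^sub>v c = 0\<^sub>v n" using l by simp
    obtain i where i: "i < n" "c $ i \<noteq> 0"
      using assms by (metis carrier_vecD eq_vecI index_zero_vec(1) index_zero_vec(2))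
    have "(a c \<cdot>\<^sub>v c) $ i = 0" using eq i by simp
    then show "a c = 0" using i assms by simp
  qed
  show ?thesis
    apply (rule finite_lin_indpt2)
    using assms H by auto
qed

lemma kron_carrier: "a \<in> carrier_vec d \<Longrightarrow> b \<in> carrier_vec d \<Longrightarrow> kron_vec a b \<in> carrier_vec (d*d)"
  by (rule carrier_vecI) (auto simp: kron_vec_def)

lemma ketbra_carrier: "a \<in> carrier_vec n \<Longrightarrow> ketbra a a \<in> carrier_mat n n"
  by (simp add: ketbra_def)

lemma rank_ketbra:
  assumes a: "a \<in> carrier_vec n" "a \<noteq> 0\<^sub>v n"
  shows "vec_space.rank n (ketbra a a) = 1"
proof -
  have C: "ketbra a a \<in> carrier_mat n n" using a by (simp add: ketbra_def)
  have le: "vec_space.rank n (ketbra a a) \<le> 1"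
    apply (rule vec_space.rank_le_1_product_entries[OF C, where f="\<lambda>i. a $ i" and g="\<lambda>j. cnj (a $ j)"])
    using a by (auto simp: ketbra_def)
  obtain j where j: "j < n" "a $ j \<noteq> 0"
    using a by (metis carrier_vecD eq_vecI index_zero_vec(1) index_zero_vec(2))
  define c where "c = col (ketbra a a) j"
  have cc: "c \<in> carrier_vec n" using C j by (simp add: c_def)
  have cj: "c $ j = a $ j * cnj (a $ j)" using a j by (simp add: c_def ketbra_def)
  have "c $ j \<noteq> 0" using cj j by simp
  then have cnz: "c \<noteq> 0\<^sub>v n" using j by auto
  have cin: "{c} \<subseteq> set (cols (ketbra a a))"
    using C j by (auto simp: c_def cols_def)
  have "vec_space.rank n (ketbra a a) \<ge> card {c}"
    by (rule vec_space.rank_ge_card_indpt[OF C cin vec_space.lin_indpt_single[OF cc cnz]])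
  then show ?thesis using le by simp
qed

lemma sum3_swap':
  fixes f :: "nat \<Rightarrow> nat \<Rightarrow> nat \<Rightarrow> complex"
  shows "(\<Sum>i<N. \<Sum>j<N. \<Sum>k<m. f i j k) = (\<Sum>k<m. \<Sum>i<N. \<Sum>j<N. f i j k)"
proof -
  have "(\<Sum>i<N. \<Sum>j<N. \<Sum>k<m. f i j k) = (\<Sum>i<N. \<Sum>k<m. \<Sum>j<N. f i j k)"
    by (rule sum.cong[OF refl], rule sum.swap)
  also have "\<dots> = (\<Sum>k<m. \<Sum>i<N. \<Sum>j<N. f i j k)" by (rule sum.swap)
  finally show ?thesis .
qed

lemma expval_form:
  fixes z :: "nat \<Rightarrow> complex vec"
  assumes zc: "\<forall>k<m. z k \<in> carrier_vec N" and y: "y \<in> carrier_vec N"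
  shows "expval y (mat N N (\<lambda>(i,j). \<Sum>k<m. z k $ i * cnj (z k $ j))) =
     (\<Sum>k<m. complex_of_real ((cmod (ip N y (z k)))^2))"
proof -
  have "expval y (mat N N (\<lambda>(i,j). \<Sum>k<m. z k $ i * cnj (z k $ j))) =
     (\<Sum>i<N. cnj (y $ i) * (\<Sum>j<N. (\<Sum>k<m. z k $ i * cnj (z k $ j)) * y $ j))"
    using y by (simp add: expval_def scalar_prod_def atLeast0LessThan)
  also have "\<dots> = (\<Sum>i<N. \<Sum>j<N. \<Sum>k<m. cnj (y $ i) * z k $ i * (cnj (z k $ j) * y $ j))"
    by (simp add: sum_distrib_left sum_distrib_right algebra_simps)
  also have "\<dots> = (\<Sum>k<m. \<Sum>i<N. \<Sum>j<N. cnj (y $ i) * z k $ i * (cnj (z k $ j) * y $ j))"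
    using sum3_swap'[where f="\<lambda>i j k. cnj (y $ i) * z k $ i * (cnj (z k $ j) * y $ j)" and N=N and m=m] by simp
  also have "\<dots> = (\<Sum>k<m. ip N y (z k) * cnj (ip N y (z k)))"
    apply (rule sum.cong[OF refl])
    unfolding ip_def cnj_sum sum_product
    by (rule sum.cong[OF refl], rule sum.cong[OF refl]) simp
  also have "\<dots> = (\<Sum>k<m. complex_of_real ((cmod (ip N y (z k)))^2))"
    by (simp add: complex_norm_square del: of_real_power)
  finally show ?thesis .
qed

lemma psd_ketbra:
  assumes a: "a \<in> carrier_vec n"
  shows "psd n (ketbra a a)"
proof -
  have s1: "\<And>f::nat\<Rightarrow>complex. (\<Sum>k<(1::nat). f k) = f 0" by simp
  have e: "ketbra a a = mat n n (\<lambda>(i,j). \<Sum>k<(1::nat). (\<lambda>_. a) k $ i * cnj ((\<lambda>_. a) k $ j))"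
    unfolding s1 using a by (simp add: ketbra_def)
  have "adj (ketbra a a) = ketbra a a"
    using a by (auto simp: adj_def ketbra_def)
  moreover have "expval v (ketbra a a) \<in> \<real> \<and> Re (expval v (ketbra a a)) \<ge> 0" if v: "v \<in> carrier_vec n" for v
  proof -
    have "expval v (ketbra a a) = (\<Sum>k<(1::nat). complex_of_real ((cmod (ip n v ((\<lambda>_. a) k)))^2))"
      unfolding e by (rule expval_form) (use a v in auto)
    then show ?thesis by simp
  qed
  ultimately show ?thesis using a by (simp add: psd_def ketbra_def)
qed

lemma graph_ketbra:
  assumes "\<And>i j. i < n \<Longrightarrow> j < n \<Longrightarrow> i \<noteq> j \<Longrightarrow> a $ i \<noteq> 0 \<Longrightarrow> a $ j \<noteq> 0 \<Longrightarrow> {i,j} \<in> H"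
    and "a \<in> carrier_vec n"
  shows "graph_of n (ketbra a a) \<subseteq> H"
  using assms unfolding graph_of_def by (auto simp: ketbra_def)

lemma sep_form:
  assumes vx: "\<forall>k<m. v k \<in> carrier_vec d \<and> x k \<in> carrier_vec d"
    and rho: "\<rho> = mat (d*d) (d*d) (\<lambda>ij. \<Sum>k<m. kron_mat (ketbra (v k) (v k)) (ketbra (x k) (x k)) $$ ij)"
  shows "\<rho> = mat (d*d) (d*d) (\<lambda>(i,j). \<Sum>k<m. kron_vec (v k) (x k) $ i * cnj (kron_vec (v k) (x k) $ j))"
  unfolding rho
proof (rule eq_matI)
  fix i j assume i: "i < dim_row (mat (d*d) (d*d) (\<lambda>(i,j). \<Sum>k<m. kron_vec (v k) (x k) $ i * cnj (kron_vec (v k) (x k) $ j)))"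
    and j: "j < dim_col (mat (d*d) (d*d) (\<lambda>(i,j). \<Sum>k<m. kron_vec (v k) (x k) $ i * cnj (kron_vec (v k) (x k) $ j)))"
  then have i: "i < d*d" and j: "j < d*d" by auto
  then have d: "d > 0" by (cases d) auto
  have "i div d < d" "j div d < d" using i j by (auto simp: less_mult_imp_div_less)
  moreover have "i mod d < d" "j mod d < d" using d by auto
  note lt = calculation
  have "(\<Sum>k<m. kron_mat (ketbra (v k) (v k)) (ketbra (x k) (x k)) $$ (i,j)) =
        (\<Sum>k<m. kron_vec (v k) (x k) $ i * cnj (kron_vec (v k) (x k) $ j))"
  proof (rule sum.cong[OF refl])
    fix k assume "k \<in> {..<m}"
    then have dv: "dim_vec (v k) = d" and dx: "dim_vec (x k) = d" using vx by auto
    have "kron_mat (ketbra (v k) (v k)) (ketbra (x k) (x k)) $$ (i,j) =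
       ketbra (v k) (v k) $$ (i div d, j div d) * ketbra (x k) (x k) $$ (i mod d, j mod d)"
      unfolding kron_mat_def using i j dv dx by (simp add: ketbra_def)
    also have "\<dots> = v k $ (i div d) * cnj (v k $ (j div d)) * (x k $ (i mod d) * cnj (x k $ (j mod d)))"
      unfolding ketbra_def using lt dv dx by simp
    also have "\<dots> = kron_vec (v k) (x k) $ i * cnj (kron_vec (v k) (x k) $ j)"
      unfolding kron_vec_def using i j dv dx by (simp add: algebra_simps)
    finally show "kron_mat (ketbra (v k) (v k)) (ketbra (x k) (x k)) $$ (i,j) =
        kron_vec (v k) (x k) $ i * cnj (kron_vec (v k) (x k) $ j)" .
  qed
  then show "mat (d*d) (d*d) (\<lambda>ij. \<Sum>k<m. kron_mat (ketbra (v k) (v k)) (ketbra (x k) (x k)) $$ ij) $$ (i,j)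
     = mat (d*d) (d*d) (\<lambda>(i,j). \<Sum>k<m. kron_vec (v k) (x k) $ i * cnj (kron_vec (v k) (x k) $ j)) $$ (i,j)"
    using i j by simp
qed auto

lemma Kmat_entry:
  assumes u: "\<forall>i<n. u i \<in> carrier_vec d" and w: "\<forall>i<n. w i \<in> carrier_vec d"
    and i: "i < n" and p: "p < d*d"
  shows "Kmat d n u w $$ (i,p) = cnj (kron_vec (u i) (w i) $ p)"
proof -
  have "Kmat d n u w $$ (i,p) = (\<Sum>i'<n. ketbra (std_basis n i') (kron_vec (u i') (w i')) $$ (i,p))"
    unfolding Kmat_def using i p by simp
  also have "\<dots> = (\<Sum>i'<n. if i' = i then cnj (kron_vec (u i) (w i) $ p) else 0)"
  proof (rule sum.cong[OF refl])
    fix i' assume "i' \<in> {..<n}"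
    then have dd: "dim_vec (kron_vec (u i') (w i')) = d*d" using u w by auto
    have "ketbra (std_basis n i') (kron_vec (u i') (w i')) $$ (i,p) = std_basis n i' $ i * cnj (kron_vec (u i') (w i') $ p)"
      unfolding ketbra_def using i p dd by (simp add: std_basis_def)
    also have "\<dots> = (if i' = i then cnj (kron_vec (u i) (w i) $ p) else 0)"
      using i by (simp add: std_basis_def)
    finally show "ketbra (std_basis n i') (kron_vec (u i') (w i')) $$ (i,p) = (if i' = i then cnj (kron_vec (u i) (w i) $ p) else 0)" .
  qed
  also have "\<dots> = cnj (kron_vec (u i) (w i) $ p)" using i by simp
  finally show ?thesis .
qed

theorem mainTheorem5:
  fixes d n :: nat and H :: "nat set set" and u w :: "nat \<Rightarrow> complex vec" and \<rho> :: "complex mat"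
  assumes "simple_graph n H"
    and "orthonormal_family d n u"
    and "orthonormal_family d n w"
    and "\<rho> \<in> FH d n u w H"
    and "separable_state d \<rho>"
  shows "Kmat d n u w * \<rho> * adj (Kmat d n u w) \<in> R1 n (psd_graph_cone n H)"
proof -
  have uc: "\<forall>i<n. u i \<in> carrier_vec d" and wc: "\<forall>i<n. w i \<in> carrier_vec d"
    using assms(2,3) by (auto simp: orthonormal_family_def)
  obtain m :: nat and v x :: "nat \<Rightarrow> complex vec" where vx: "\<forall>k<m. v k \<in> carrier_vec d \<and> x k \<in> carrier_vec d"
    and rho0: "\<rho> = mat (d*d) (d*d) (\<lambda>ij. \<Sum>k<m. kron_mat (ketbra (v k) (v k)) (ketbra (x k) (x k)) $$ ij)"
    using assms(5) unfolding separable_state_def by blast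
  define z where "z k = kron_vec (v k) (x k)" for k
  have zc: "\<forall>k<m. z k \<in> carrier_vec (d*d)" using vx by (auto simp: z_def kron_carrier)
  have rho: "\<rho> = mat (d*d) (d*d) (\<lambda>(i,j). \<Sum>k<m. z k $ i * cnj (z k $ j))"
    unfolding z_def by (rule sep_form[OF vx rho0])
  define K where "K = Kmat d n u w"
  have Kc: "K \<in> carrier_mat n (d*d)" by (simp add: K_def Kmat_def)
  define a where "a k = K *\<^sub>v z k" for k
  have ac: "a k \<in> carrier_vec n" for k unfolding a_def using Kc by (metis carrier_matD(1) carrier_vec_dim_vec dim_mult_mat_vec)
  have main: "K * \<rho> * adj K = mat n n (\<lambda>(i,j). \<Sum>k<m. a k $ i * cnj (a k $ j))"
    unfolding a_def by (rule KrhoK[OF Kc zc rho])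
  have aent: "a k $ i = ip d (u i) (v k) * ip d (w i) (x k)" if k: "k < m" and i: "i < n" for k i
  proof -
    have dz: "dim_vec (z k) = d*d" using zc k by auto
    have "a k $ i = (\<Sum>p<dim_vec (z k). row K i $ p * z k $ p)"
      using Kc i by (simp add: a_def scalar_prod_def atLeast0LessThan)
    also have "\<dots> = (\<Sum>p<d*d. K $$ (i,p) * z k $ p)"
      unfolding dz using Kc i by (intro sum.cong) auto
    also have "\<dots> = ip (d*d) (kron_vec (u i) (w i)) (z k)"
      unfolding ip_def K_def by (rule sum.cong[OF refl]) (simp add: Kmat_entry[OF uc wc i])
    also have "\<dots> = ip d (u i) (v k) * ip d (w i) (x k)"
      unfolding z_def by (rule ip_kron) (use uc wc vx i k in auto)
    finally show ?thesis .
  qed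
  define r where "r i j = (\<Sum>k<m. (cmod (ip d (u i) (v k)))^2 * (cmod (ip d (w j) (x k)))^2)" for i j
  have Dent: "Dmat n u w \<rho> $$ (i,j) = complex_of_real (r i j)" if i: "i < n" and j: "j < n" for i j
  proof -
    have kc: "kron_vec (u i) (w j) \<in> carrier_vec (d*d)" using uc wc i j by (simp add: kron_carrier)
    have "Dmat n u w \<rho> $$ (i,j) = (\<Sum>k<m. complex_of_real ((cmod (ip (d*d) (kron_vec (u i) (w j)) (z k)))^2))"
      unfolding Dmat_def using i j by (simp add: rho expval_form[OF zc kc])
    also have "\<dots> = complex_of_real (r i j)"
      unfolding r_def of_real_sum
      by (rule sum.cong[OF refl]) (simp add: z_def ip_kron uc wc vx i j norm_mult power_mult_distrib)
    finally show ?thesis .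
  qed
  have rpos: "r i j > 0" if "k < m" "ip d (u i) (v k) \<noteq> 0" "ip d (w j) (x k) \<noteq> 0" for i j k
  proof -
    have "0 < (cmod (ip d (u i) (v k)))^2 * (cmod (ip d (w j) (x k)))^2" using that by simp
    also have "\<dots> \<le> r i j" unfolding r_def
      by (rule member_le_sum) (use that in auto)
    finally show ?thesis .
  qed
  have GH: "graph_of n (Dmat n u w \<rho>) \<subseteq> H" using assms(4) by (simp add: FH_def)
  have key: "{i,j} \<in> H" if k: "k < m" and i: "i < n" and j: "j < n" and ij: "i \<noteq> j"
     and ai: "a k $ i \<noteq> 0" and aj: "a k $ j \<noteq> 0" for k i j
  proof -
    have 1: "ip d (u i) (v k) \<noteq> 0" "ip d (w i) (x k) \<noteq> 0" using ai aent[OF k i] by auto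
    have 2: "ip d (u j) (v k) \<noteq> 0" "ip d (w j) (x k) \<noteq> 0" using aj aent[OF k j] by auto
    have "r i j > 0" using rpos[OF k 1(1) 2(2)] .
    moreover have "r j i > 0" using rpos[OF k 2(1) 1(2)] .
    ultimately have "Dmat n u w \<rho> $$ (i,j) * Dmat n u w \<rho> $$ (j,i) \<noteq> 0"
      using Dent i j by simp
    then have "{i,j} \<in> graph_of n (Dmat n u w \<rho>)"
      unfolding graph_of_def using i j ij by blast
    then show ?thesis using GH by blast
  qed
  show ?thesis
  proof (cases "n = 0")
    case True
    show ?thesis unfolding R1_def K_def[symmetric]
      apply (rule CollectI, rule exI[where x=0], rule exI[where x="\<lambda>_. 0"], rule exI[where x="\<lambda>_. 0\<^sub>m n n"])
      using main True by (auto intro!: eq_matI)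
  next
    case False
    define e0 where "e0 = std_basis n 0"
    have e0c: "e0 \<in> carrier_vec n" by (simp add: e0_def std_basis_def)
    have e00: "e0 $ 0 = 1" using False by (simp add: e0_def std_basis_def)
    have e0nz: "e0 \<noteq> 0\<^sub>v n" using e00 False by auto
    define c where "c k = (if a k = 0\<^sub>v n then 0 else 1::real)" for k
    define Xs where "Xs k = (if a k = 0\<^sub>v n then ketbra e0 e0 else ketbra (a k) (a k))" for k
    have e0g: "graph_of n (ketbra e0 e0) \<subseteq> H"
      by (rule graph_ketbra[OF _ e0c]) (auto simp: e0_def std_basis_def split: if_splits)
    have Xgood: "c k \<ge> 0 \<and> Xs k \<in> psd_graph_cone n H \<and> Xs k \<in> carrier_mat n n \<and> vec_space.rank n (Xs k) = 1"
      if k: "k < m" for k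
    proof (cases "a k = 0\<^sub>v n")
      case True
      then show ?thesis using e0c e0nz e0g
        by (simp add: c_def Xs_def psd_graph_cone_def psd_ketbra ketbra_carrier rank_ketbra)
    next
      case F: False
      have "graph_of n (ketbra (a k) (a k)) \<subseteq> H"
        by (rule graph_ketbra[OF _ ac]) (rule key[OF k], auto)
      then show ?thesis using ac[of k] F
        by (simp add: c_def Xs_def psd_graph_cone_def psd_ketbra ketbra_carrier rank_ketbra)
    qed
    have eq: "K * \<rho> * adj K = mat n n (\<lambda>ij. \<Sum>k<m. complex_of_real (c k) * Xs k $$ ij)"
      unfolding main
    proof (rule eq_matI)
      fix i j assume "i < dim_row (mat n n (\<lambda>ij. \<Sum>k<m. complex_of_real (c k) * Xs k $$ ij))"
        "j < dim_col (mat n n (\<lambda>ij. \<Sum>k<m. complex_of_real (c k) * Xs k $$ ij))"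
      then have i: "i < n" and j: "j < n" by auto
      have "(\<Sum>k<m. a k $ i * cnj (a k $ j)) = (\<Sum>k<m. complex_of_real (c k) * Xs k $$ (i,j))"
      proof (rule sum.cong[OF refl])
        fix k
        show "a k $ i * cnj (a k $ j) = complex_of_real (c k) * Xs k $$ (i,j)"
        proof (cases "a k = 0\<^sub>v n")
          case True then show ?thesis using i by (simp add: c_def)
        next
          case False then show ?thesis using i j ac[of k] by (simp add: c_def Xs_def ketbra_def)
        qed
      qed
      then show "mat n n (\<lambda>(i,j). \<Sum>k<m. a k $ i * cnj (a k $ j)) $$ (i,j) =
          mat n n (\<lambda>ij. \<Sum>k<m. complex_of_real (c k) * Xs k $$ ij) $$ (i,j)"
        using i j by simp
    qed auto
    show ?thesis unfolding R1_def K_def[symmetric]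
      apply (rule CollectI)
      apply (rule exI[where x=m], rule exI[where x=c], rule exI[where x=Xs])
      using Xgood eq by simp
  qed
qed

end
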